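(* Every arrow $w\in\mathcal A$ of the groupoid $\mathcal G_N$ can be represented as a reduced word in a unique way. This reduced word is either an empty word (a unit $e_i$) or, for some $d\ge 1$, a product of the form $$w=A_{i_1,i_2}^{(k)}A_{i_2,i_3}^{(-k)}A_{i_3,i_4}^{(k)}\cdots A_{i_d,i_{d+1}}^{((-1)^{d+1}k)}$$ with $k\in\{-1,1\}$ and $i_\ell\neq i_{\ell+1}$ for all $1\le \ell\le d$.
   Context: Fix an integer $N\ge 3$. Let $\mathcal G_N$ be the groupoid with object set $\{1,\dots,N\}$ generated by the arrows $A_{i,j}^{(k)}$, $i\neq j\in\{1,\dots,N\}$, $k\in\{-1,1\}$, where $A_{i,j}^{(k)}$ has source $i$ and target $j$, subject to the relations $A_{i,j}^{(k)}A_{j,\ell}^{(k)}=A_{i,\ell}^{(k)}$ for all $i,j,\ell\in\{1,\dots,N\}$, $k\in\{-1,1\}$, with the convention $A_{i,i}^{(k)}:=e_i$, the unit arrow at object $i$. A composition $fg$ is defined when the target of $f$ equals the source of $g$. Let $\mathcal A$ denote the set of arrows. A word is a composition of finitely many generators $A_{i,j}^{(k)}$ ($i\ne j$); the units $e_i$ are called empty words. A nonempty word is reduced if the generating relations cannot be applied to it so as to reduce the number of generators used; empty words are also considered reduced. Two words represent the same arrow iff one can be transformed into the other by repeated application of the generating relations. *)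

theory Defs
  imports Main
begin

text \<open>A generator A_{i,j}^(k) is encoded as the triple (i, j, k).
  A word is a pair (s, gs): s is its source object (needed so that the empty
  word e_s has an object) and gs is the list of generators, composed left to
  right (the composition fg means first f then g).\<close>

type_synonym gen = "nat \<times> nat \<times> int"
type_synonym word = "nat \<times> gen list"

definition valid_gen :: "nat \<Rightarrow> gen \<Rightarrow> bool" where
  "valid_gen N g = (case g of (i, j, k) \<Rightarrow>
     i \<in> {1..N} \<and> j \<in> {1..N} \<and> i \<noteq> j \<and> k \<in> {-1, 1})"

fun chain :: "nat \<Rightarrow> gen list \<Rightarrow> bool" where
  "chain s [] = True"
| "chain s ((i, j, k) # gs) = (i = s \<and> chain j gs)"

definition is_word :: "nat \<Rightarrow> word \<Rightarrow> bool" where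
  "is_word N w = (fst w \<in> {1..N} \<and> (\<forall>g\<in>set (snd w). valid_gen N g) \<and> chain (fst w) (snd w))"

text \<open>One application of a generating relation A_{i,j}^(k) A_{j,l}^(k) = A_{i,l}^(k)
  in the direction that reduces the number of generators (with A_{i,i}^(k) = e_i).
  Relations involving a unit on the left-hand side are trivial.\<close>

definition reduce_step :: "nat \<Rightarrow> word \<Rightarrow> word \<Rightarrow> bool" where
  "reduce_step N w w' = (is_word N w \<and>
     (\<exists>xs ys i j l k. snd w = xs @ [(i, j, k), (j, l, k)] @ ys \<and>
        w' = (fst w, xs @ (if i = l then [] else [(i, l, k)]) @ ys)))"

definition same_arrow :: "nat \<Rightarrow> word \<Rightarrow> word \<Rightarrow> bool" where
  "same_arrow N = equivclp (reduce_step N)"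

definition reduced :: "nat \<Rightarrow> word \<Rightarrow> bool" where
  "reduced N w = (\<not> (\<exists>w'. reduce_step N w w'))"

end

theory Submission
  imports Defs
begin

fun alt :: "gen list \<Rightarrow> bool" where
  "alt (a # b # r) = (snd (snd a) \<noteq> snd (snd b) \<and> alt (b # r))"
| "alt _ = True"

fun push :: "gen \<Rightarrow> gen list \<Rightarrow> gen list" where
  "push (i, j, k) [] = [(i, j, k)]"
| "push (i, j, k) ((j', l, k') # r) =
     (if k = k' then (if i = l then r else (i, l, k) # r) else (i, j, k) # (j', l, k') # r)"

definition nf :: "gen list \<Rightarrow> gen list" where
  "nf gs = foldr push gs []"

fun tgt_of :: "nat \<Rightarrow> gen list \<Rightarrow> nat" where
  "tgt_of s [] = s"
| "tgt_of s ((i, j, k) # gs) = tgt_of j gs"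

definition vl :: "nat \<Rightarrow> gen list \<Rightarrow> bool" where
  "vl N gs = (\<forall>g\<in>set gs. valid_gen N g)"

lemma chain_append: "chain s (xs @ ys) = (chain s xs \<and> chain (tgt_of s xs) ys)"
  by (induction xs arbitrary: s) auto

lemma alt_tl: "alt (g # gs) \<Longrightarrow> alt gs"
  by (cases gs) auto

lemma push_alt: "alt (g # R) \<Longrightarrow> push g R = g # R"
  by (cases g; cases R) auto

lemma nf_cons: "nf (g # gs) = push g (nf gs)"
  by (simp add: nf_def)

lemma nf_alt: "alt gs \<Longrightarrow> nf gs = gs"
proof (induction gs)
  case Nil
  then show ?case by (simp add: nf_def)
next
  case (Cons g gs)
  then have "nf gs = gs" using alt_tl by blast
  then show ?case using push_alt[OF Cons.prems] by (simp add: nf_cons)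
qed

lemma push_props:
  assumes "valid_gen N (i, j, k)" "vl N R" "chain j R" "alt R"
  shows "vl N (push (i, j, k) R) \<and> chain i (push (i, j, k) R) \<and> alt (push (i, j, k) R)"
proof (cases R)
  case Nil
  then show ?thesis using assms by (auto simp: vl_def)
next
  case (Cons h r)
  obtain j' l k' where h: "h = (j', l, k')" by (cases h) auto
  show ?thesis
  proof (cases r)
    case Nil
    then show ?thesis using assms Cons h by (auto simp: vl_def valid_gen_def)
  next
    case (Cons h2 r2)
    then show ?thesis using assms \<open>R = h # r\<close> h by (cases h2) (auto simp: vl_def valid_gen_def)
  qed
qed

lemma nf_props: "vl N gs \<Longrightarrow> chain s gs \<Longrightarrow> vl N (nf gs) \<and> chain s (nf gs) \<and> alt (nf gs)"
proof (induction gs arbitrary: s)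
  case Nil
  then show ?case by (simp add: nf_def vl_def)
next
  case (Cons g gs)
  obtain i j k where g: "g = (i, j, k)" by (cases g) auto
  have "vl N gs" "valid_gen N g" using Cons.prems by (auto simp: vl_def)
  moreover have "chain j gs" "s = i" using Cons.prems g by auto
  ultimately have "vl N (nf gs) \<and> chain j (nf gs) \<and> alt (nf gs)" using Cons.IH by blast
  then show ?case using push_props[of N i j k "nf gs"] \<open>valid_gen N g\<close> g \<open>s = i\<close>
    by (simp add: nf_cons)
qed

lemma push2:
  assumes "valid_gen N (i, j, k)" "valid_gen N (j, l, k)" "vl N R" "chain l R" "alt R"
  shows "push (i, j, k) (push (j, l, k) R) = (if i = l then R else push (i, l, k) R)"
proof (cases R)
  case Nil
  then show ?thesis by simp
next
  case (Cons h r)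
  obtain j' m k' where h: "h = (j', m, k')" by (cases h) auto
  show ?thesis
  proof (cases r)
    case Nil
    then show ?thesis using assms Cons h by (auto simp: vl_def valid_gen_def)
  next
    case (Cons h2 r2)
    then show ?thesis using assms \<open>R = h # r\<close> h by (cases h2) (auto simp: vl_def valid_gen_def)
  qed
qed

lemma nf_append: "nf (xs @ ys) = foldr push xs (nf ys)"
  by (simp add: nf_def)

lemma step_nf:
  assumes "reduce_step N w w'"
  shows "fst w' = fst w \<and> nf (snd w') = nf (snd w) \<and> is_word N w'"
proof -
  from assms obtain xs ys i j l k where w: "is_word N w"
    "snd w = xs @ [(i, j, k), (j, l, k)] @ ys"
    "w' = (fst w, xs @ (if i = l then [] else [(i, l, k)]) @ ys)"
    unfolding reduce_step_def by blast
  let ?s = "fst w"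
  have ch: "chain ?s xs" "chain (tgt_of ?s xs) ([(i, j, k), (j, l, k)] @ ys)"
    using w(1,2) chain_append[of ?s xs] by (auto simp: is_word_def)
  hence ti: "tgt_of ?s xs = i" and cl: "chain l ys" by auto
  have v1: "valid_gen N (i, j, k)" "valid_gen N (j, l, k)" "vl N ys" "vl N xs"
    using w(1,2) by (auto simp: is_word_def vl_def)
  have P: "vl N (nf ys) \<and> chain l (nf ys) \<and> alt (nf ys)" using nf_props[OF v1(3) cl] .
  have "nf (snd w) = foldr push xs (push (i, j, k) (push (j, l, k) (nf ys)))"
    using w(2) by (simp add: nf_append nf_cons)
  also have "\<dots> = foldr push xs (if i = l then nf ys else push (i, l, k) (nf ys))"
    using push2[OF v1(1,2)] P by simp
  also have "\<dots> = nf (snd w')" using w(3) by (simp add: nf_append nf_cons)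
  finally have e: "nf (snd w') = nf (snd w)" by simp
  have "is_word N w'"
  proof -
    have "valid_gen N (i, l, k)" if "i \<noteq> l" using v1(1,2) that by (auto simp: valid_gen_def)
    moreover have "chain ?s (snd w')"
      using w(3) ch(1) ti cl by (auto simp: chain_append)
    ultimately show ?thesis using w(1,3) v1(3,4) by (auto simp: is_word_def vl_def)
  qed
  then show ?thesis using e w(3) by simp
qed

lemma same_inv:
  assumes "same_arrow N w r" "is_word N w"
  shows "is_word N r \<and> fst r = fst w \<and> nf (snd r) = nf (snd w)"
  using assms(1) unfolding same_arrow_def equivclp_def
proof (induction rule: rtranclp_induct)
  case base
  then show ?case using assms(2) by simp
next
  case (step y z)
  from step(2) show ?case
  proof (cases rule: symclpE)
    case base
    then show ?thesis using step_nf[OF base] step(3) by simp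
  next
    case sym
    then show ?thesis using step_nf[OF sym] step(3) by (auto simp: reduce_step_def)
  qed
qed

lemma not_alt: "\<not> alt gs \<Longrightarrow> \<exists>xs a b ys. gs = xs @ [a, b] @ ys \<and> snd (snd a) = snd (snd b)"
proof (induction gs rule: alt.induct)
  case (1 a b r)
  show ?case
  proof (cases "snd (snd a) = snd (snd b)")
    case True
    then show ?thesis by (metis append_Cons append_Nil)
  next
    case False
    then have "\<not> alt (b # r)" using 1(2) by simp
    then obtain xs c d ys where "b # r = xs @ [c, d] @ ys" "snd (snd c) = snd (snd d)"
      using 1(1) False by blast
    then show ?thesis by (metis append_Cons)
  qed
qed auto

lemma reduced_alt:
  assumes "is_word N w" "reduced N w"
  shows "alt (snd w)"
proof (rule ccontr)
  assume "\<not> alt (snd w)"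
  then obtain xs a b ys where e: "snd w = xs @ [a, b] @ ys" "snd (snd a) = snd (snd b)"
    using not_alt by blast
  obtain i j k where a: "a = (i, j, k)" by (cases a) auto
  obtain j' l k' where b: "b = (j', l, k')" by (cases b) auto
  have "chain (fst w) (snd w)" using assms(1) by (simp add: is_word_def)
  hence "j' = j" using e a b by (simp add: chain_append)
  hence "reduce_step N w (fst w, xs @ (if i = l then [] else [(i, l, k)]) @ ys)"
    unfolding reduce_step_def using assms(1) e a b
    by (intro conjI exI[of _ xs] exI[of _ ys] exI[of _ i] exI[of _ j] exI[of _ l] exI[of _ k]) auto
  then show False using assms(2) unfolding reduced_def by blast
qed

lemma chain_nth: "chain s gs \<Longrightarrow> Suc p < length gs \<Longrightarrow> fst (snd (gs ! p)) = fst (gs ! Suc p)"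
proof (induction gs arbitrary: s p)
  case Nil
  then show ?case by simp
next
  case (Cons g gs)
  obtain i j k where g: "g = (i, j, k)" by (cases g) auto
  show ?case
  proof (cases p)
    case 0
    then show ?thesis using Cons.prems g by (cases gs) auto
  next
    case (Suc q)
    then show ?thesis using Cons.prems Cons.IH[of j q] g by auto
  qed
qed

lemma alt_nth:
  "alt gs \<Longrightarrow> \<forall>g\<in>set gs. snd (snd g) \<in> {-1, 1} \<Longrightarrow> p < length gs \<Longrightarrow>
   snd (snd (gs ! p)) = (-1) ^ p * snd (snd (gs ! 0))"
proof (induction gs arbitrary: p rule: alt.induct)
  case (1 a b r)
  show ?case
  proof (cases p)
    case 0
    then show ?thesis by simp
  next
    case (Suc q)
    have "snd (snd ((b # r) ! q)) = (-1) ^ q * snd (snd b)"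
      using 1 Suc by (auto simp del: alt.simps dest: alt_tl)
    moreover have "snd (snd b) = - snd (snd a)" using 1(2,3) by auto
    ultimately show ?thesis using Suc by simp
  qed
next
  case ("2_1")
  then show ?case by simp
next
  case ("2_2" v)
  then show ?case by simp
qed

lemma exist_red: "is_word N w \<Longrightarrow> \<exists>r. is_word N r \<and> reduced N r \<and> same_arrow N w r"
proof (induction "length (snd w)" arbitrary: w rule: less_induct)
  case less
  show ?case
  proof (cases "reduced N w")
    case True
    have "same_arrow N w w" by (simp add: same_arrow_def equivclp_def)
    then show ?thesis using less.prems True by blast
  next
    case False
    then obtain w' where st: "reduce_step N w w'" unfolding reduced_def by blast
    have iw: "is_word N w'" using step_nf[OF st] by simp
    have "length (snd w') < length (snd w)" using st unfolding reduce_step_def by auto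
    then obtain r where r: "is_word N r" "reduced N r" "same_arrow N w' r" using less.hyps iw by blast
    have "same_arrow N w r" using r(3) st unfolding same_arrow_def equivclp_def
      by (meson converse_rtranclp_into_rtranclp symclpI)
    then show ?thesis using r by blast
  qed
qed

lemma shape:
  assumes "is_word N r" "reduced N r" "snd r \<noteq> []"
  shows "\<exists>d::nat. d \<ge> 1 \<and> (\<exists>k::int. k \<in> {-1, 1} \<and> (\<exists>i::nat \<Rightarrow> nat.
               snd r = map (\<lambda>l. (i l, i (l + 1), (-1) ^ (l + 1) * k)) [1..<d + 1]
               \<and> (\<forall>l\<in>{1..d}. i l \<noteq> i (l + 1))))"
proof -
  define gs where "gs = snd r"
  define d where "d = length gs"
  define k where "k = snd (snd (gs ! 0))"
  define i where "i = (\<lambda>l. if l \<le> d then fst (gs ! (l - 1)) else fst (snd (gs ! (d - 1))))"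
  have d1: "d \<ge> 1" using assms(3) by (simp add: d_def gs_def Suc_le_eq)
  have ch: "chain (fst r) gs" and vg: "\<forall>g\<in>set gs. valid_gen N g" using assms(1) by (auto simp: is_word_def gs_def)
  have al: "alt gs" using reduced_alt[OF assms(1,2)] by (simp add: gs_def)
  have kv: "\<forall>g\<in>set gs. snd (snd g) \<in> {-1, 1}" using vg by (auto simp: valid_gen_def)
  have kk: "k \<in> {-1, 1}" proof -
    have "gs ! 0 \<in> set gs" using d1 by (intro nth_mem) (auto simp: d_def)
    then show ?thesis using kv unfolding k_def by blast
  qed
  have ip: "i (p + 1) = fst (gs ! p)" if "p < d" for p using that by (simp add: i_def)
  have ip2: "i (p + 2) = fst (snd (gs ! p))" if "p < d" for p
  proof (cases "p + 2 \<le> d")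
    case True
    then show ?thesis using chain_nth[OF ch, of p] by (simp add: i_def d_def)
  next
    case False
    then have "p = d - 1" using that by simp
    then show ?thesis using False by (simp add: i_def)
  qed
  have kp: "snd (snd (gs ! p)) = (-1) ^ (p + 2) * k" if "p < d" for p
    using alt_nth[OF al kv, of p] that by (simp add: k_def d_def)
  have "gs = map (\<lambda>l. (i l, i (l + 1), (-1) ^ (l + 1) * k)) [1..<d + 1]"
  proof (rule nth_equalityI)
    show "length gs = length (map (\<lambda>l. (i l, i (l + 1), (-1) ^ (l + 1) * k)) [1..<d + 1])"
      by (simp only: length_map length_upt d_def add_diff_cancel_right')
  next
    fix p assume "p < length gs"
    then have p: "p < d" by (simp add: d_def)
    have "map (\<lambda>l. (i l, i (l + 1), (-1) ^ (l + 1) * k)) [1..<d + 1] ! p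
        = (i (p + 1), i (p + 2), (-1) ^ (p + 2) * k)" proof -
      have "p < length [1..<d + 1]" using p by simp
      then show ?thesis using nth_map[of p "[1..<d + 1]"] nth_upt[of 1 p "d + 1"] p
        by (simp del: upt_Suc add: add.commute)
    qed
    also have "\<dots> = gs ! p" using ip[OF p] ip2[OF p] kp[OF p] by (simp add: prod_eq_iff)
    finally show "gs ! p = map (\<lambda>l. (i l, i (l + 1), (-1) ^ (l + 1) * k)) [1..<d + 1] ! p" by simp
  qed
  moreover have "\<forall>l\<in>{1..d}. i l \<noteq> i (l + 1)"
  proof
    fix l assume l: "l \<in> {1..d}"
    then obtain p where p: "l = p + 1" "p < d" by (metis Suc_eq_plus1 Suc_le_eq atLeastAtMost_iff less_eq_Suc_le not0_implies_Suc not_one_le_zero)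
    have "valid_gen N (gs ! p)" using vg p(2) by (simp add: d_def)
    then have "fst (gs ! p) \<noteq> fst (snd (gs ! p))" by (auto simp: valid_gen_def split: prod.splits)
    then show "i l \<noteq> i (l + 1)" using ip[OF p(2)] ip2[OF p(2)] p(1) by (simp add: add.assoc)
  qed
  ultimately show ?thesis using d1 kk unfolding gs_def by blast
qed

theorem lemma2p1:
  fixes N :: nat
  assumes "N \<ge> 3"
  shows "(\<forall>w. is_word N w \<longrightarrow>
            (\<exists>!r. is_word N r \<and> reduced N r \<and> same_arrow N w r))
       \<and> (\<forall>r. is_word N r \<and> reduced N r \<longrightarrow>
            snd r = [] \<or>
            (\<exists>d::nat. d \<ge> 1 \<and> (\<exists>k::int. k \<in> {-1, 1} \<and> (\<exists>i::nat \<Rightarrow> nat.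
               snd r = map (\<lambda>l. (i l, i (l + 1), (-1) ^ (l + 1) * k)) [1..<d + 1]
               \<and> (\<forall>l\<in>{1..d}. i l \<noteq> i (l + 1))))))"
proof (intro conjI allI impI)
  fix w assume w: "is_word N w"
  show "\<exists>!r. is_word N r \<and> reduced N r \<and> same_arrow N w r"
  proof (rule ex_ex1I)
    show "\<exists>r. is_word N r \<and> reduced N r \<and> same_arrow N w r" using exist_red[OF w] .
  next
    fix r1 r2
    assume r1: "is_word N r1 \<and> reduced N r1 \<and> same_arrow N w r1"
      and r2: "is_word N r2 \<and> reduced N r2 \<and> same_arrow N w r2"
    have a1: "snd r1 = nf (snd w)" "fst r1 = fst w"
      using same_inv[OF _ w, of r1] r1 nf_alt[OF reduced_alt[of N r1]] by auto
    have a2: "snd r2 = nf (snd w)" "fst r2 = fst w"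
      using same_inv[OF _ w, of r2] r2 nf_alt[OF reduced_alt[of N r2]] by auto
    show "r1 = r2" using a1 a2 by (simp add: prod_eq_iff)
  qed
next
  fix r assume "is_word N r \<and> reduced N r"
  then show "snd r = [] \<or> (\<exists>d::nat. d \<ge> 1 \<and> (\<exists>k::int. k \<in> {-1, 1} \<and> (\<exists>i::nat \<Rightarrow> nat.
               snd r = map (\<lambda>l. (i l, i (l + 1), (-1) ^ (l + 1) * k)) [1..<d + 1]
               \<and> (\<forall>l\<in>{1..d}. i l \<noteq> i (l + 1)))))"
    using shape by blast
qed

end
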